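(* Let $d\geq3$ and let $T$ be a set of three affinely independent points in $\mathbb{N}_0^d$. Then the $2$-completion $E_2^\infty(T)$ of $T$ equals $\Lambda(T)\cap\mathbb{N}_0^d$.
   Context: $\mathbb{N}_0=\{0,1,2,\dots\}$. For nonempty $\Gamma\subseteq\mathbb{N}_0^d$, $\Lambda(\Gamma)$ is the coset in $\mathbb{Z}^d$ generated by $\Gamma$ (smallest coset of a subgroup of $\mathbb{Z}^d$ containing $\Gamma$); each $\lambda\in\Lambda(\Gamma)$ can be written $\lambda=\gamma+\sum_{\alpha\in\Gamma,\alpha\neq\gamma}m_{\gamma,\alpha}(\alpha-\gamma)$ with $\gamma\in\Gamma$ and integers $m_{\gamma,\alpha}$, finitely many nonzero. $d(\Gamma,\lambda)$ is the infimum over all such representations of $\max\big(\sum_{m_{\gamma,\alpha}>0}m_{\gamma,\alpha},-\sum_{m_{\gamma,\alpha}<0}m_{\gamma,\alpha}\big)$, and $E_n(\Gamma)=\{\lambda\in\Lambda(\Gamma)\cap\mathbb{N}_0^d:d(\Gamma,\lambda)\leq n\}$. Set $E_n^1(T)=E_n(T)$, $E_n^{k+1}(T)=E_n(E_n^k(T))$, and the $n$-completion $E_n^\infty(T)=\bigcup_{k\geq1}E_n^k(T)$. *)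

theory Defs
  imports "HOL-Analysis.Analysis"
begin

text \<open>Points of Z^d are vectors of type int ^ 'n, with d = CARD('n).\<close>

definition nonneg_pts :: "(int ^ 'n) set" where
  "nonneg_pts = {x. \<forall>i. x $ i \<ge> 0}"

definition is_rep :: "(int ^ 'n) set \<Rightarrow> int ^ 'n \<Rightarrow> int ^ 'n \<Rightarrow> (int ^ 'n \<Rightarrow> int) \<Rightarrow> bool" where
  "is_rep G lam gam m \<longleftrightarrow> gam \<in> G \<and> finite {a. m a \<noteq> 0} \<and> {a. m a \<noteq> 0} \<subseteq> G - {gam} \<and>
     lam = gam + (\<Sum>a\<in>{a. m a \<noteq> 0}. of_int (m a) * (a - gam))"

definition Lambda :: "(int ^ 'n) set \<Rightarrow> (int ^ 'n) set" where
  "Lambda G = {lam. \<exists>gam m. is_rep G lam gam m}"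

definition rep_cost :: "(int ^ 'n \<Rightarrow> int) \<Rightarrow> nat" where
  "rep_cost m = max (\<Sum>a\<in>{a. m a \<noteq> 0}. nat (m a)) (\<Sum>a\<in>{a. m a \<noteq> 0}. nat (- m a))"

definition gdist :: "(int ^ 'n) set \<Rightarrow> int ^ 'n \<Rightarrow> nat" where
  "gdist G lam = Inf {rep_cost m | gam m. is_rep G lam gam m}"

definition E :: "nat \<Rightarrow> (int ^ 'n) set \<Rightarrow> (int ^ 'n) set" where
  "E n G = {lam \<in> Lambda G \<inter> nonneg_pts. gdist G lam \<le> n}"

definition E_completion :: "nat \<Rightarrow> (int ^ 'n) set \<Rightarrow> (int ^ 'n) set" where
  "E_completion n T = (\<Union>k\<in>{1..}. (E n ^^ k) T)"

definition to_real_vec :: "int ^ 'n \<Rightarrow> real ^ 'n" where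
  "to_real_vec x = (\<chi> i. real_of_int (x $ i))"

end

theory Submission
  imports Defs
begin


lemma of_int_vec_index[simp]: "(of_int k :: int ^ 'n) $ i = k"
  by (cases k) (simp_all add: of_nat_index)

definition comb :: "int \<Rightarrow> int \<Rightarrow> int \<Rightarrow> int^'n \<Rightarrow> int^'n \<Rightarrow> int^'n \<Rightarrow> int^'n" where
  "comb a b c A B C = of_int a * A + of_int b * B + of_int c * C"

lemma comb_index: "comb a b c A B C $ i = a * A$i + b * B$i + c * C$i"
  by (simp add: comb_def)

definition indep :: "int^'n \<Rightarrow> int^'n \<Rightarrow> int^'n \<Rightarrow> bool" where
  "indep A B C \<longleftrightarrow> (\<forall>\<alpha> \<beta> \<gamma>. \<alpha> + \<beta> + \<gamma> = 0 \<longrightarrow> comb \<alpha> \<beta> \<gamma> A B C = 0 \<longrightarrow> \<alpha> = 0 \<and> \<beta> = 0 \<and> \<gamma> = 0)"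

lemma indepD: "indep A B C \<Longrightarrow> \<alpha> + \<beta> + \<gamma> = 0 \<Longrightarrow> comb \<alpha> \<beta> \<gamma> A B C = 0 \<Longrightarrow> \<alpha> = 0 \<and> \<beta> = 0 \<and> \<gamma> = 0"
  unfolding indep_def by blast

lemma indep_distinct:
  assumes "indep A B C" shows "A \<noteq> B" "A \<noteq> C" "B \<noteq> C"
proof -
  show "A \<noteq> B"
  proof
    assume "A = B"
    have "comb 1 (-1) 0 A B C = 0" by (simp add: comb_def \<open>A = B\<close>)
    with indepD[OF assms, of 1 "-1" 0] show False by simp
  qed
  show "A \<noteq> C"
  proof
    assume "A = C"
    have "comb 1 0 (-1) A B C = 0" by (simp add: comb_def \<open>A = C\<close>)
    with indepD[OF assms, of 1 0 "-1"] show False by simp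
  qed
  show "B \<noteq> C"
  proof
    assume "B = C"
    have "comb 0 1 (-1) A B C = 0" by (simp add: comb_def \<open>B = C\<close>)
    with indepD[OF assms, of 0 1 "-1"] show False by simp
  qed
qed

lemma comb_swap12: "comb a b c A B C = comb b a c B A C"
  by (simp add: comb_def algebra_simps)
lemma comb_swap13: "comb a b c A B C = comb c b a C B A"
  by (simp add: comb_def algebra_simps)
lemma comb_swap23: "comb a b c A B C = comb a c b A C B"
  by (simp add: comb_def algebra_simps)

lemma indep_swap12: "indep A B C \<Longrightarrow> indep B A C"
  unfolding indep_def by (metis comb_swap12 add.commute)
lemma indep_swap13: "indep A B C \<Longrightarrow> indep C B A"
  unfolding indep_def by (metis comb_swap13 add.commute add.assoc)
lemma indep_swap23: "indep A B C \<Longrightarrow> indep A C B"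
  unfolding indep_def by (metis comb_swap23 add.commute add.assoc)

lemma indep_replace1:
  assumes "indep A B C" "p + q + r = 1" "p = 1 \<or> p = -1"
  shows "indep (comb p q r A B C) B C"
  unfolding indep_def
proof (intro allI impI)
  fix \<alpha> \<beta> \<gamma> :: int
  assume s: "\<alpha> + \<beta> + \<gamma> = 0" and z: "comb \<alpha> \<beta> \<gamma> (comb p q r A B C) B C = 0"
  have "comb \<alpha> \<beta> \<gamma> (comb p q r A B C) B C = comb (\<alpha>*p) (\<alpha>*q+\<beta>) (\<alpha>*r+\<gamma>) A B C"
    by (simp add: comb_def algebra_simps)
  moreover have "\<alpha>*p + (\<alpha>*q+\<beta>) + (\<alpha>*r+\<gamma>) = 0"
    using s assms(2) by (metis add.assoc add.left_commute distrib_left mult.right_neutral)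
  ultimately have "\<alpha>*p = 0 \<and> \<alpha>*q+\<beta> = 0 \<and> \<alpha>*r+\<gamma> = 0"
    using indepD[OF assms(1)] z by metis
  then show "\<alpha> = 0 \<and> \<beta> = 0 \<and> \<gamma> = 0" using assms(3) by auto
qed

lemma indep_replace3:
  assumes "indep A B C" "p + q + r = 1" "r = 1 \<or> r = -1"
  shows "indep A B (comb p q r A B C)"
proof -
  have "indep C B A" using assms(1) by (rule indep_swap13)
  then have "indep (comb r q p C B A) B A"
    by (rule indep_replace1) (use assms in auto)
  then show ?thesis by (metis indep_swap13 comb_swap13)
qed

lemma Inf_le_nat: "(x::nat) \<in> X \<Longrightarrow> Inf X \<le> x"
  by (simp add: Inf_nat_def Least_le)

lemma is_rep_self: "g \<in> G \<Longrightarrow> is_rep G g g (\<lambda>_. 0)"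
  by (simp add: is_rep_def)

lemma gdist_le: "is_rep G l g m \<Longrightarrow> gdist G l \<le> rep_cost m"
  unfolding gdist_def by (rule Inf_le_nat) blast

lemma sub_E: assumes "G \<subseteq> nonneg_pts" shows "G \<subseteq> E n G"
proof
  fix g assume g: "g \<in> G"
  have r: "is_rep G g g (\<lambda>_. 0)" using g by (rule is_rep_self)
  have "gdist G g \<le> 0" using gdist_le[OF r] by (simp add: rep_cost_def)
  then show "g \<in> E n G" using r g assms unfolding E_def Lambda_def by auto
qed

lemma E_nonneg: "E n G \<subseteq> nonneg_pts"
  unfolding E_def by auto

lemma chain_nonneg: "T \<subseteq> nonneg_pts \<Longrightarrow> (E n ^^ k) T \<subseteq> nonneg_pts"
  by (induction k) (auto simp: E_def)

lemma Echain_mono1: "T \<subseteq> nonneg_pts \<Longrightarrow> (E n ^^ k) T \<subseteq> (E n ^^ Suc k) T"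
  using sub_E[OF chain_nonneg] by simp

lemma Echain_mono: "T \<subseteq> nonneg_pts \<Longrightarrow> k \<le> l \<Longrightarrow> (E n ^^ k) T \<subseteq> (E n ^^ l) T"
  using lift_Suc_mono_le[of "\<lambda>k. (E n ^^ k) T"] Echain_mono1 by blast

lemma rep2:
  fixes i j :: int
  assumes "g \<in> G" "P \<in> G" "Q \<in> G" "P \<noteq> g" "Q \<noteq> g" "P \<noteq> Q"
  defines "m \<equiv> (\<lambda>z. if z = P then i else if z = Q then j else 0)"
  shows "is_rep G (g + of_int i * (P - g) + of_int j * (Q - g)) g m"
    and "rep_cost m = max (nat i + nat j) (nat (-i) + nat (-j))"
proof -
  have S: "{a. m a \<noteq> 0} \<subseteq> {P, Q}" by (auto simp: m_def split: if_splits)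
  have fin: "finite {a. m a \<noteq> 0}" using S finite_subset by blast
  have "(\<Sum>a\<in>{a. m a \<noteq> 0}. of_int (m a) * (a - g)) = (\<Sum>a\<in>{P,Q}. of_int (m a) * (a - g))"
    by (rule sum.mono_neutral_left) (use S in auto)
  also have "\<dots> = of_int i * (P - g) + of_int j * (Q - g)"
    using assms(6) by (simp add: m_def)
  finally show "is_rep G (g + of_int i * (P - g) + of_int j * (Q - g)) g m"
    unfolding is_rep_def using assms(1-5) S fin by (auto simp: add.assoc)
  have "(\<Sum>a\<in>{a. m a \<noteq> 0}. nat (m a)) = (\<Sum>a\<in>{P,Q}. nat (m a))"
    by (rule sum.mono_neutral_left) (use S in auto)
  also have "\<dots> = nat i + nat j" using assms(6) by (simp add: m_def)
  finally have 1: "(\<Sum>a\<in>{a. m a \<noteq> 0}. nat (m a)) = nat i + nat j" .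
  have "(\<Sum>a\<in>{a. m a \<noteq> 0}. nat (- m a)) = (\<Sum>a\<in>{P,Q}. nat (- m a))"
    by (rule sum.mono_neutral_left) (use S in auto)
  also have "\<dots> = nat (-i) + nat (-j)" using assms(6) by (simp add: m_def)
  finally have 2: "(\<Sum>a\<in>{a. m a \<noteq> 0}. nat (- m a)) = nat (-i) + nat (-j)" .
  show "rep_cost m = max (nat i + nat j) (nat (-i) + nat (-j))"
    unfolding rep_cost_def 1 2 ..
qed

lemma in_Ecomp: "x \<in> E_completion n T \<longleftrightarrow> (\<exists>k\<ge>1. x \<in> (E n ^^ k) T)"
  unfolding E_completion_def by auto

lemma move:
  assumes T: "T \<subseteq> nonneg_pts"
    and g: "g \<in> E_completion 2 T" and P: "P \<in> E_completion 2 T" and Q: "Q \<in> E_completion 2 T"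
    and d: "P \<noteq> g" "Q \<noteq> g" "P \<noteq> Q"
    and D: "D \<in> nonneg_pts" "D = g + of_int i * (P - g) + of_int j * (Q - g)"
    and c: "nat i + nat j \<le> 2" "nat (-i) + nat (-j) \<le> 2"
  shows "D \<in> E_completion 2 T"
proof -
  obtain k1 k2 k3 where k: "g \<in> (E 2 ^^ k1) T" "P \<in> (E 2 ^^ k2) T" "Q \<in> (E 2 ^^ k3) T"
    using g P Q by (auto simp: in_Ecomp)
  define k where "k = max k1 (max k2 k3)"
  let ?G = "(E 2 ^^ k) T"
  have "g \<in> ?G" "P \<in> ?G" "Q \<in> ?G"
  proof -
    have "k1 \<le> k" "k2 \<le> k" "k3 \<le> k" unfolding k_def by auto
    then show "g \<in> ?G" "P \<in> ?G" "Q \<in> ?G"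
      using k Echain_mono[OF T, of k1 k 2] Echain_mono[OF T, of k2 k 2] Echain_mono[OF T, of k3 k 2]
      by auto
  qed
  note r = rep2[OF this d, of i j]
  have "gdist ?G D \<le> max (nat i + nat j) (nat (-i) + nat (-j))"
    using gdist_le[OF r(1)] r(2) D(2) by simp
  also have "\<dots> \<le> 2" using c by simp
  finally have "gdist ?G D \<le> 2" .
  moreover have "D \<in> Lambda ?G" using r(1) D(2) unfolding Lambda_def by auto
  ultimately have "D \<in> E 2 ?G" using D(1) unfolding E_def by auto
  then have "D \<in> (E 2 ^^ Suc k) T" by simp
  then show ?thesis unfolding in_Ecomp by (intro exI[of _ "Suc k"]) auto
qed

lemma Ecomp_nonneg: "T \<subseteq> nonneg_pts \<Longrightarrow> E_completion n T \<subseteq> nonneg_pts"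
  unfolding E_completion_def using chain_nonneg by blast

lemma nonneg_from_weights:
  fixes w d r :: int
  assumes "w * d = r" "0 \<le> r" "0 < w" shows "0 \<le> d"
  using assms by (metis zero_le_mult_iff not_less)

definition good :: "(int^'n) set \<Rightarrow> int \<Rightarrow> bool" where
  "good T M \<longleftrightarrow> (\<forall>A B C a b c x. A \<in> E_completion 2 T \<and> B \<in> E_completion 2 T \<and> C \<in> E_completion 2 T
     \<and> indep A B C \<and> a + b + c = 1 \<and> x = comb a b c A B C \<and> x \<in> nonneg_pts \<and> \<bar>a\<bar> + \<bar>b\<bar> + \<bar>c\<bar> < M
     \<longrightarrow> x \<in> E_completion 2 T)"

lemma goodD:
  "good T M \<Longrightarrow> A \<in> E_completion 2 T \<Longrightarrow> B \<in> E_completion 2 T \<Longrightarrow> C \<in> E_completion 2 T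
   \<Longrightarrow> indep A B C \<Longrightarrow> a + b + c = 1 \<Longrightarrow> x = comb a b c A B C \<Longrightarrow> x \<in> nonneg_pts
   \<Longrightarrow> \<bar>a\<bar> + \<bar>b\<bar> + \<bar>c\<bar> < M \<Longrightarrow> x \<in> E_completion 2 T"
  unfolding good_def by blast

lemma nonneg_iff: "x \<in> nonneg_pts \<longleftrightarrow> (\<forall>i. 0 \<le> x $ i)"
  by (simp add: nonneg_pts_def)



lemma comb_comb1: "comb \<alpha> \<beta> \<gamma> (comb p q r A B C) B C = comb (\<alpha>*p) (\<alpha>*q+\<beta>) (\<alpha>*r+\<gamma>) A B C"
  by (simp add: comb_def algebra_simps)

lemma comb_comb3: "comb \<alpha> \<beta> \<gamma> A B (comb p q r A B C) = comb (\<alpha>+\<gamma>*p) (\<beta>+\<gamma>*q) (\<gamma>*r) A B C"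
  by (simp add: comb_def algebra_simps)

lemma comb_repA:
  assumes "p + q + r = 1" shows "comb p q r A B C = A + of_int q * (B - A) + of_int r * (C - A)"
proof -
  have p: "p = 1 - q - r" using assms by simp
  show ?thesis unfolding vec_eq_iff comb_index p
    by (simp add: algebra_simps)
qed

lemma comb_repB:
  assumes "p + q + r = 1" shows "comb p q r A B C = B + of_int p * (A - B) + of_int r * (C - B)"
proof -
  have q: "q = 1 - p - r" using assms by simp
  show ?thesis unfolding vec_eq_iff comb_index q
    by (simp add: algebra_simps)
qed

lemma nonneg_D:
  fixes w :: int
  assumes "\<And>i. w * D $ i = r i" "\<And>i. 0 \<le> r i" "0 < w"
  shows "D \<in> nonneg_pts"
  unfolding nonneg_iff
proof
  fix i
  have "0 \<le> w * D $ i" using assms(1,2)[of i] by simp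
  then show "0 \<le> D $ i" using assms(3) by (simp add: zero_le_mult_iff)
qed

lemma case_pos2:
  assumes T: "T \<subseteq> nonneg_pts" and IH: "good T M"
    and R: "A \<in> E_completion 2 T" "B \<in> E_completion 2 T" "C \<in> E_completion 2 T"
    and ind: "indep A B C" and s: "a + b + c = 1" and x: "x = comb a b c A B C" "x \<in> nonneg_pts"
    and M: "\<bar>a\<bar> + \<bar>b\<bar> + \<bar>c\<bar> \<le> M" and b: "b \<ge> 1" and c: "c \<ge> 1"
  shows "x \<in> E_completion 2 T"
proof -
  define D where "D = comb (-1) 1 1 A B C"
  have RN: "A \<in> nonneg_pts" "B \<in> nonneg_pts" "C \<in> nonneg_pts"
    using R Ecomp_nonneg[OF T] by blast+
  have a: "a = 1 - b - c" using s by simp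
  have Dn: "D \<in> nonneg_pts"
  proof (rule nonneg_D)
    fix i
    show "(b + c - 1) * D $ i = x $ i + (c - 1) * B $ i + (b - 1) * C $ i"
      unfolding x(1) D_def comb_index a by (simp add: algebra_simps)
    show "0 \<le> x $ i + (c - 1) * B $ i + (b - 1) * C $ i"
      using x(2) RN b c unfolding nonneg_iff by (intro add_nonneg_nonneg mult_nonneg_nonneg) auto
  qed (use b c in auto)
  have dist: "A \<noteq> B" "A \<noteq> C" "B \<noteq> C" using indep_distinct[OF ind] by auto
  have DR: "D \<in> E_completion 2 T"
  proof (rule move[OF T R(1) R(2) R(3), of D 1 1])
    show "D = A + of_int 1 * (B - A) + of_int 1 * (C - A)"
      unfolding D_def by (rule comb_repA) simp
  qed (use dist Dn in auto)
  have ind2: "indep D B C" unfolding D_def by (rule indep_replace1[OF ind]) auto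
  show ?thesis
  proof (rule goodD[OF IH DR R(2) R(3) ind2])
    show "(b + c - 1) + (1 - c) + (1 - b) = 1" by simp
    have "(b + c - 1) * (-1) = a" "(b + c - 1) * 1 + (1 - c) = b" "(b + c - 1) * 1 + (1 - b) = c"
      using s by auto
    then show "x = comb (b + c - 1) (1 - c) (1 - b) D B C"
      unfolding D_def comb_comb1 x by simp
    show "x \<in> nonneg_pts" by fact
    have "\<bar>a\<bar> = b + c - 1" "\<bar>b\<bar> = b" "\<bar>c\<bar> = c" "\<bar>b + c - 1\<bar> = b + c - 1" "\<bar>1 - c\<bar> = c - 1" "\<bar>1 - b\<bar> = b - 1"
      using s b c by auto
    then show "\<bar>b + c - 1\<bar> + \<bar>1 - c\<bar> + \<bar>1 - b\<bar> < M" using M by linarith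
  qed
qed

lemma case_pos1a:
  assumes T: "T \<subseteq> nonneg_pts" and IH: "good T M"
    and R: "A \<in> E_completion 2 T" "B \<in> E_completion 2 T" "C \<in> E_completion 2 T"
    and ind: "indep A B C" and s: "a + b + c = 1" and x: "x = comb a b c A B C" "x \<in> nonneg_pts"
    and M: "\<bar>a\<bar> + \<bar>b\<bar> + \<bar>c\<bar> \<le> M" and b: "b \<ge> 1" and c: "c \<le> 0" and ac: "a + 1 \<le> c"
  shows "x \<in> E_completion 2 T"
proof -
  define D where "D = comb (-1) 2 0 A B C"
  have RN: "A \<in> nonneg_pts" "B \<in> nonneg_pts" "C \<in> nonneg_pts"
    using R Ecomp_nonneg[OF T] by blast+
  have bb: "b = 1 - a - c" using s by simp
  have Dn: "D \<in> nonneg_pts"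
  proof (rule nonneg_D)
    fix i
    show "(- a) * D $ i = x $ i + (- a - 1 + c) * B $ i + (- c) * C $ i"
      unfolding x(1) D_def comb_index bb by (simp add: algebra_simps)
    show "0 \<le> x $ i + (- a - 1 + c) * B $ i + (- c) * C $ i"
    proof -
      have h: "0 \<le> x $ i" "0 \<le> B $ i" "0 \<le> C $ i" using x(2) RN unfolding nonneg_iff by auto
      have "0 \<le> (- a - 1 + c) * B $ i" by (rule mult_nonneg_nonneg) (use h ac in auto)
      moreover have "0 \<le> (- c) * C $ i" by (rule mult_nonneg_nonneg) (use h c in auto)
      ultimately show ?thesis using h by linarith
    qed
  qed (use ac c in auto)
  have dist: "A \<noteq> B" "A \<noteq> C" "B \<noteq> C" using indep_distinct[OF ind] by auto
  have DR: "D \<in> E_completion 2 T"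
  proof (rule move[OF T R(1) R(2) R(3), of D 2 0])
    show "D = A + of_int 2 * (B - A) + of_int 0 * (C - A)"
      unfolding D_def by (rule comb_repA) simp
  qed (use dist Dn in auto)
  have ind2: "indep D B C" unfolding D_def by (rule indep_replace1[OF ind]) auto
  show ?thesis
  proof (rule goodD[OF IH DR R(2) R(3) ind2])
    show "(- a) + (1 + a - c) + c = 1" by simp
    have "(- a) * (-1) = a" "(- a) * 2 + (1 + a - c) = b" "(- a) * 0 + c = c"
      using s by auto
    then show "x = comb (- a) (1 + a - c) c D B C"
      unfolding D_def comb_comb1 x by simp
    show "x \<in> nonneg_pts" by fact
    have "\<bar>a\<bar> = - a" "\<bar>b\<bar> = 1 - a - c" "\<bar>c\<bar> = - c" "\<bar>- a\<bar> = - a" "\<bar>1 + a - c\<bar> = c - a - 1"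
      using s b c ac by auto
    then show "\<bar>- a\<bar> + \<bar>1 + a - c\<bar> + \<bar>c\<bar> < M" using M c by linarith
  qed
qed

lemma case_pos1c:
  assumes T: "T \<subseteq> nonneg_pts" and IH: "good T M"
    and R: "A \<in> E_completion 2 T" "B \<in> E_completion 2 T" "C \<in> E_completion 2 T"
    and ind: "indep A B C" and s: "a + b + c = 1" and x: "x = comb a b c A B C" "x \<in> nonneg_pts"
    and M: "\<bar>a\<bar> + \<bar>b\<bar> + \<bar>c\<bar> \<le> M" and ac: "c = a" and a: "a \<le> -1"
  shows "x \<in> E_completion 2 T"
proof -
  define D where "D = comb (-1) 3 (-1) A B C"
  have RN: "A \<in> nonneg_pts" "B \<in> nonneg_pts" "C \<in> nonneg_pts"
    using R Ecomp_nonneg[OF T] by blast+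
  have bb: "b = 1 - 2 * a" using s ac by simp
  have Dn: "D \<in> nonneg_pts"
  proof (rule nonneg_D)
    fix i
    show "(- a) * D $ i = x $ i + (- a - 1) * B $ i"
      unfolding x(1) D_def comb_index bb ac by (simp add: algebra_simps)
    show "0 \<le> x $ i + (- a - 1) * B $ i"
      using x(2) RN a unfolding nonneg_iff by (intro add_nonneg_nonneg mult_nonneg_nonneg) auto
  qed (use a in auto)
  have dist: "A \<noteq> B" "A \<noteq> C" "B \<noteq> C" using indep_distinct[OF ind] by auto
  have DR: "D \<in> E_completion 2 T"
  proof (rule move[OF T R(2) R(1) R(3), of D "-1" "-1"])
    show "D = B + of_int (-1) * (A - B) + of_int (-1) * (C - B)"
      unfolding D_def by (rule comb_repB) simp
  qed (use dist Dn in auto)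
  have ind2: "indep A B D" unfolding D_def by (rule indep_replace3[OF ind]) auto
  show ?thesis
  proof (rule goodD[OF IH R(1) R(2) DR ind2])
    show "0 + (1 + a) + (- a) = 1" by simp
    have "0 + (- a) * (-1) = a" "(1 + a) + (- a) * 3 = b" "(- a) * (-1) = c"
      using s ac by auto
    then show "x = comb 0 (1 + a) (- a) A B D"
      unfolding D_def comb_comb3 x by simp
    show "x \<in> nonneg_pts" by fact
    have "\<bar>a\<bar> = - a" "\<bar>b\<bar> = 1 - 2 * a" "\<bar>c\<bar> = - a" "\<bar>- a\<bar> = - a" "\<bar>1 + a\<bar> = - 1 - a"
      using bb ac a by auto
    then show "\<bar>0\<bar> + \<bar>1 + a\<bar> + \<bar>- a\<bar> < M" using M by linarith
  qed
qed


lemma stepB: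
  assumes T: "T \<subseteq> nonneg_pts" and IH: "good T M"
    and R: "A \<in> E_completion 2 T" "B \<in> E_completion 2 T" "C \<in> E_completion 2 T"
    and ind: "indep A B C" and s: "a + b + c = 1" and x: "x = comb a b c A B C" "x \<in> nonneg_pts"
    and M: "\<bar>a\<bar> + \<bar>b\<bar> + \<bar>c\<bar> \<le> M" and b: "b \<ge> 1" and neg: "\<not> (0 \<le> a \<and> 0 \<le> c)"
  shows "x \<in> E_completion 2 T"
proof -
  have x': "x = comb c b a C B A" using x(1) comb_swap13 by metis
  have ind': "indep C B A" using ind by (rule indep_swap13)
  have s': "c + b + a = 1" using s by simp
  have M': "\<bar>c\<bar> + \<bar>b\<bar> + \<bar>a\<bar> \<le> M" using M by simp
  consider "c \<ge> 1" | "a \<ge> 1" | "a \<le> 0" "c \<le> 0" by linarith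
  then show ?thesis
  proof cases
    case 1 then show ?thesis using case_pos2[OF T IH R ind s x M b] by simp
  next
    case 2 then show ?thesis using case_pos2[OF T IH R(3) R(2) R(1) ind' s' x' x(2) M' b] by simp
  next
    case 3
    consider "a + 1 \<le> c" | "c + 1 \<le> a" | "c = a" by linarith
    then show ?thesis
    proof cases
      case 1 then show ?thesis using case_pos1a[OF T IH R ind s x M b] 3 by simp
    next
      case 2 then show ?thesis using case_pos1a[OF T IH R(3) R(2) R(1) ind' s' x' x(2) M' b] 3 by simp
    next
      case cc: 3
      have "a \<le> -1" using neg 3 cc by auto
      then show ?thesis using case_pos1c[OF T IH R ind s x M cc] by simp
    qed
  qed
qed

lemma step:
  assumes T: "T \<subseteq> nonneg_pts" and IH: "good T M"
    and R: "A \<in> E_completion 2 T" "B \<in> E_completion 2 T" "C \<in> E_completion 2 T"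
    and ind: "indep A B C" and s: "a + b + c = 1" and x: "x = comb a b c A B C" "x \<in> nonneg_pts"
    and M: "\<bar>a\<bar> + \<bar>b\<bar> + \<bar>c\<bar> \<le> M"
  shows "x \<in> E_completion 2 T"
proof (cases "0 \<le> a \<and> 0 \<le> b \<and> 0 \<le> c")
  case True
  then consider "a = 1" "b = 0" "c = 0" | "a = 0" "b = 1" "c = 0" | "a = 0" "b = 0" "c = 1"
    using s by linarith
  then show ?thesis
    by cases (use R x(1) in \<open>simp_all add: comb_def\<close>)
next
  case False
  consider "b \<ge> 1" | "a \<ge> 1" | "c \<ge> 1" using s by linarith
  then show ?thesis
  proof cases
    case 1 then show ?thesis using stepB[OF T IH R ind s x M] False by auto
  next
    case 2
    have x': "x = comb b a c B A C" using x(1) comb_swap12 by metis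
    have ind': "indep B A C" using ind by (rule indep_swap12)
    show ?thesis
      by (rule stepB[OF T IH R(2) R(1) R(3) ind' _ x' x(2)]) (use s M 2 False in auto)
  next
    case 3
    have x': "x = comb a c b A C B" using x(1) comb_swap23 by metis
    have ind': "indep A C B" using ind by (rule indep_swap23)
    show ?thesis
      by (rule stepB[OF T IH R(1) R(3) R(2) ind' _ x' x(2)]) (use s M 3 False in auto)
  qed
qed

lemma good_all: assumes T: "T \<subseteq> nonneg_pts" shows "good T (int n)"
proof (induction n)
  case 0 show ?case unfolding good_def by auto
next
  case (Suc n)
  show ?case unfolding good_def
  proof (intro allI impI, elim conjE)
    fix A B C a b c x
    assume R: "A \<in> E_completion 2 T" "B \<in> E_completion 2 T" "C \<in> E_completion 2 T"
      and ind: "indep A B C" and s: "a + b + c = 1" and x: "x = comb a b c A B C" "x \<in> nonneg_pts"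
      and M: "\<bar>a\<bar> + \<bar>b\<bar> + \<bar>c\<bar> < int (Suc n)"
    show "x \<in> E_completion 2 T"
      by (rule step[OF T Suc.IH R ind s x]) (use M in simp)
  qed
qed

lemma in_good:
  assumes T: "T \<subseteq> nonneg_pts"
    and R: "A \<in> E_completion 2 T" "B \<in> E_completion 2 T" "C \<in> E_completion 2 T"
    and ind: "indep A B C" and s: "a + b + c = 1" and x: "x = comb a b c A B C" "x \<in> nonneg_pts"
  shows "x \<in> E_completion 2 T"
  by (rule goodD[OF good_all[OF T, of "Suc (nat (\<bar>a\<bar> + \<bar>b\<bar> + \<bar>c\<bar>))"] R ind s x]) simp



definition Lset :: "int^'n \<Rightarrow> int^'n \<Rightarrow> int^'n \<Rightarrow> (int^'n) set" where
  "Lset A B C = {x. \<exists>a b c. a + b + c = 1 \<and> x = comb a b c A B C}"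

lemma L_eq:
  fixes y u g :: "int^'n"
  assumes "y = comb a1 b1 c1 A B C" "u = comb a2 b2 c2 A B C" "g = comb a3 b3 c3 A B C"
  shows "y + of_int k * (u - g) = comb (a1 + k * (a2 - a3)) (b1 + k * (b2 - b3)) (c1 + k * (c2 - c3)) A B C"
  unfolding vec_eq_iff
proof
  fix i
  have "(y + of_int k * (u - g)) $ i = y $ i + k * (u $ i - g $ i)"
    by (simp only: vector_add_component vector_mult_component vector_minus_component of_int_vec_index)
  also have "\<dots> = (a1 + k * (a2 - a3)) * A $ i + (b1 + k * (b2 - b3)) * B $ i + (c1 + k * (c2 - c3)) * C $ i"
    unfolding assms comb_index by (simp add: algebra_simps)
  also have "\<dots> = comb (a1 + k * (a2 - a3)) (b1 + k * (b2 - b3)) (c1 + k * (c2 - c3)) A B C $ i"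
    by (simp only: comb_index)
  finally show "(y + of_int k * (u - g)) $ i = comb (a1 + k * (a2 - a3)) (b1 + k * (b2 - b3)) (c1 + k * (c2 - c3)) A B C $ i" .
qed

lemma T_sub_L: "{A, B, C} \<subseteq> Lset A B C"
proof -
  have "A = comb 1 0 0 A B C" "B = comb 0 1 0 A B C" "C = comb 0 0 1 A B C"
    by (simp_all add: vec_eq_iff comb_index)
  moreover have "(1::int) + 0 + 0 = 1" "(0::int) + 1 + 0 = 1" "(0::int) + 0 + 1 = 1" by simp_all
  ultimately have "A \<in> Lset A B C" "B \<in> Lset A B C" "C \<in> Lset A B C"
    unfolding Lset_def by blast+
  then show ?thesis by blast
qed

lemma sum_ins_shift:
  fixes f :: "int^'n \<Rightarrow> int^'n"
  assumes "finite F" "u \<notin> F"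
  shows "g + sum f (insert u F) = (g + sum f F) + f u"
proof -
  have "sum f (insert u F) = f u + sum f F" by (rule sum.insert[OF assms])
  then show ?thesis by (simp only: add_ac)
qed


lemma L_step:
  assumes "y \<in> Lset A B C" "u \<in> Lset A B C" "g \<in> Lset A B C"
  shows "y + of_int k * (u - g) \<in> Lset A B C"
proof -
  obtain a1 b1 c1 where 1: "a1 + b1 + c1 = 1" "y = comb a1 b1 c1 A B C" using assms(1) unfolding Lset_def by auto
  obtain a2 b2 c2 where 2: "a2 + b2 + c2 = 1" "u = comb a2 b2 c2 A B C" using assms(2) unfolding Lset_def by auto
  obtain a3 b3 c3 where 3: "a3 + b3 + c3 = 1" "g = comb a3 b3 c3 A B C" using assms(3) unfolding Lset_def by auto
  note e = L_eq[OF 1(2) 2(2) 3(2), of k]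
  have "(a1 + k * (a2 - a3)) + (b1 + k * (b2 - b3)) + (c1 + k * (c2 - c3))
      = (a1 + b1 + c1) + k * ((a2 + b2 + c2) - (a3 + b3 + c3))" by (simp add: algebra_simps)
  also have "\<dots> = 1" using 1 2 3 by simp
  finally show ?thesis using e unfolding Lset_def by blast
qed

lemma Lambda_sub_L:
  assumes G: "G \<subseteq> Lset A B C" shows "Lambda G \<subseteq> Lset A B C"
proof
  fix x assume "x \<in> Lambda G"
  then obtain g m where r: "is_rep G x g m" unfolding Lambda_def by auto
  have gL: "g \<in> Lset A B C" using r G unfolding is_rep_def by auto
  have key: "g + (\<Sum>a\<in>F. of_int (m a) * (a - g)) \<in> Lset A B C" if "finite F" "F \<subseteq> G" for F
    using that
  proof (induction F rule: finite_induct)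
    case empty then show ?case using gL by simp
  next
    case (insert u F)
    have eq: "g + (\<Sum>a\<in>insert u F. of_int (m a) * (a - g)) = (g + (\<Sum>a\<in>F. of_int (m a) * (a - g))) + of_int (m u) * (u - g)"
      by (rule sum_ins_shift[OF insert(1,2)])
    have "F \<subseteq> G" using insert(4) by blast
    then have ih: "g + (\<Sum>a\<in>F. of_int (m a) * (a - g)) \<in> Lset A B C" by (rule insert(3))
    have uL: "u \<in> Lset A B C" using insert(4) G by blast
    show ?case unfolding eq by (rule L_step[OF ih uL gL])
  qed
  have fin: "finite {a. m a \<noteq> 0}" and sub: "{a. m a \<noteq> 0} \<subseteq> G"
    and xe: "x = g + (\<Sum>a\<in>{a. m a \<noteq> 0}. of_int (m a) * (a - g))"
    using r unfolding is_rep_def by blast+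
  show "x \<in> Lset A B C" unfolding xe by (rule key[OF fin sub])
qed

lemma chain_L: "T \<subseteq> Lset A B C \<Longrightarrow> (E n ^^ k) T \<subseteq> Lset A B C"
proof (induction k)
  case 0 then show ?case by simp
next
  case (Suc k)
  then have "Lambda ((E n ^^ k) T) \<subseteq> Lset A B C" using Lambda_sub_L by blast
  then show ?case unfolding E_def by auto
qed

lemma L_sub_Lambda:
  assumes "A \<noteq> B" "A \<noteq> C" "B \<noteq> C"
  shows "Lset A B C \<subseteq> Lambda {A, B, C}"
proof
  fix x assume "x \<in> Lset A B C"
  then obtain a b c where s: "a + b + c = 1" and x: "x = comb a b c A B C" unfolding Lset_def by auto
  have "x = A + of_int b * (B - A) + of_int c * (C - A)" using comb_repA[OF s] x by simp
  moreover have "is_rep {A, B, C} (A + of_int b * (B - A) + of_int c * (C - A)) A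
      (\<lambda>z. if z = B then b else if z = C then c else 0)"
    by (rule rep2(1)) (use assms in auto)
  ultimately show "x \<in> Lambda {A, B, C}" unfolding Lambda_def by auto
qed


lemma to_real_vec_inj: "to_real_vec x = to_real_vec y \<Longrightarrow> x = y"
  by (simp add: to_real_vec_def vec_eq_iff)

lemma indep_from_affine:
  assumes na: "\<not> affine_dependent (to_real_vec ` {A, B, C})" and d: "A \<noteq> B" "A \<noteq> C" "B \<noteq> C"
  shows "indep A B C"
  unfolding indep_def
proof (intro allI impI)
  fix \<alpha> \<beta> \<gamma> :: int
  assume s: "\<alpha> + \<beta> + \<gamma> = 0" and z: "comb \<alpha> \<beta> \<gamma> A B C = 0"
  let ?a = "to_real_vec A" and ?b = "to_real_vec B" and ?c = "to_real_vec C"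
  have rd: "?a \<noteq> ?b" "?a \<noteq> ?c" "?b \<noteq> ?c" using d to_real_vec_inj by metis+
  define U where "U = (\<lambda>v. if v = ?a then real_of_int \<alpha> else if v = ?b then real_of_int \<beta> else real_of_int \<gamma>)"
  have S: "to_real_vec ` {A, B, C} = {?a, ?b, ?c}" by simp
  have sumU: "sum U {?a, ?b, ?c} = 0"
    using rd s unfolding U_def by simp
  have sumV: "(\<Sum>v\<in>{?a, ?b, ?c}. U v *\<^sub>R v) = 0"
  proof -
    have "(\<Sum>v\<in>{?a, ?b, ?c}. U v *\<^sub>R v) = real_of_int \<alpha> *\<^sub>R ?a + real_of_int \<beta> *\<^sub>R ?b + real_of_int \<gamma> *\<^sub>R ?c"
      using rd unfolding U_def by (simp add: algebra_simps)
    also have "\<dots> = 0"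
    proof -
      have "\<And>i. \<alpha> * A $ i + \<beta> * B $ i + \<gamma> * C $ i = 0" using z comb_index
        by (metis zero_index)
      then show ?thesis unfolding vec_eq_iff to_real_vec_def
        by (simp add: algebra_simps) (metis of_int_add of_int_mult of_int_0)
    qed
    finally show ?thesis .
  qed
  show "\<alpha> = 0 \<and> \<beta> = 0 \<and> \<gamma> = 0"
  proof (rule ccontr)
    assume nz: "\<not> (\<alpha> = 0 \<and> \<beta> = 0 \<and> \<gamma> = 0)"
    have "\<exists>v\<in>{?a, ?b, ?c}. U v \<noteq> 0" using nz rd unfolding U_def by auto
    then have "affine_dependent {?a, ?b, ?c}"
      using sumU sumV affine_dependent_explicit_finite[of "{?a, ?b, ?c}"] by auto
    then show False using na S by simp
  qed
qed

theorem lemma3p4: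
  fixes T :: "(int ^ 'n) set"
  assumes "CARD('n) \<ge> 3"
    and "T \<subseteq> nonneg_pts"
    and "card T = 3"
    and "\<not> affine_dependent (to_real_vec ` T)"
  shows "E_completion 2 T = Lambda T \<inter> nonneg_pts"
proof -
  obtain A B C where TT: "T = {A, B, C}" and d: "A \<noteq> B" "B \<noteq> C" "A \<noteq> C"
    using assms(3) card_3_iff by metis
  have ind: "indep A B C" using indep_from_affine[OF assms(4)[unfolded TT]] d by auto
  have TL: "T \<subseteq> Lset A B C" using T_sub_L TT by simp
  show ?thesis
  proof
    show "E_completion 2 T \<subseteq> Lambda T \<inter> nonneg_pts"
    proof
      fix x assume x: "x \<in> E_completion 2 T"
      then obtain k where "x \<in> (E 2 ^^ k) T" unfolding E_completion_def by auto
      then have "x \<in> Lset A B C" using chain_L[OF TL] by auto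
      then have "x \<in> Lambda T" using L_sub_Lambda d TT by auto
      moreover have "x \<in> nonneg_pts" using x Ecomp_nonneg[OF assms(2)] by auto
      ultimately show "x \<in> Lambda T \<inter> nonneg_pts" by simp
    qed
    show "Lambda T \<inter> nonneg_pts \<subseteq> E_completion 2 T"
    proof
      fix x assume x: "x \<in> Lambda T \<inter> nonneg_pts"
      then have "x \<in> Lset A B C" using Lambda_sub_L[OF TL] by auto
      then obtain a b c where s: "a + b + c = 1" and xe: "x = comb a b c A B C" unfolding Lset_def by auto
      have "T \<subseteq> E 2 T" by (rule sub_E[OF assms(2)])
      moreover have "(E 2 ^^ 1) T = E 2 T" by simp
      ultimately have "T \<subseteq> E_completion 2 T" unfolding E_completion_def
        by (metis (no_types, lifting) UN_I atLeast_iff order_refl subset_iff)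
      then have R: "A \<in> E_completion 2 T" "B \<in> E_completion 2 T" "C \<in> E_completion 2 T"
        using TT by auto
      show "x \<in> E_completion 2 T"
        by (rule in_good[OF assms(2) R ind s xe]) (use x in auto)
    qed
  qed
qed


end
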